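(* Let $p\in(0,1)$ and consider the house-of-cards Markov chain on state space $\mathbb{N}\cup\{0\}$ with transition probabilities $p_{i0}=p$ and $p_{i(i+1)}=1-p$ for all $i\in\mathbb{N}\cup\{0\}$ (and $p_{ik}=0$ otherwise). Then there do not exist positive reals $\{\alpha_k\}_{k\ge0},\{\beta_i\}_{i\ge0}$ and constants $M_1,M_2>0$ such that $$\sum_{k=0}^\infty p_{ik}\alpha_k\le M_1\beta_i\ \ \text{for all } i\ge0\qquad\text{and}\qquad \sum_{i=0}^\infty p_{ik}\beta_i\le M_2\alpha_k\ \ \text{for all }k\ge0.$$ *)

theory Defs
  imports "HOL-Analysis.Analysis"
begin

definition hoc :: "real \<Rightarrow> nat \<Rightarrow> nat \<Rightarrow> real" where
  "hoc p i k = (if k = 0 then p else if k = Suc i then 1 - p else 0)"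

end

theory Submission
  imports Defs
begin

theorem mainTheorem6:
  fixes p :: real
  assumes "0 < p" and "p < 1"
  shows "\<not> (\<exists>(\<alpha>::nat \<Rightarrow> real) (\<beta>::nat \<Rightarrow> real) (M1::real) (M2::real).
            (\<forall>k. \<alpha> k > 0) \<and> (\<forall>i. \<beta> i > 0) \<and> M1 > 0 \<and> M2 > 0 \<and>
            (\<forall>i. summable (\<lambda>k. hoc p i k * \<alpha> k) \<and>
                 (\<Sum>k. hoc p i k * \<alpha> k) \<le> M1 * \<beta> i) \<and>
            (\<forall>k. summable (\<lambda>i. hoc p i k * \<beta> i) \<and>
                 (\<Sum>i. hoc p i k * \<beta> i) \<le> M2 * \<alpha> k))"
proof
  assume "\<exists>(\<alpha>::nat \<Rightarrow> real) (\<beta>::nat \<Rightarrow> real) (M1::real) (M2::real).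
            (\<forall>k. \<alpha> k > 0) \<and> (\<forall>i. \<beta> i > 0) \<and> M1 > 0 \<and> M2 > 0 \<and>
            (\<forall>i. summable (\<lambda>k. hoc p i k * \<alpha> k) \<and>
                 (\<Sum>k. hoc p i k * \<alpha> k) \<le> M1 * \<beta> i) \<and>
            (\<forall>k. summable (\<lambda>i. hoc p i k * \<beta> i) \<and>
                 (\<Sum>i. hoc p i k * \<beta> i) \<le> M2 * \<alpha> k)"
  then obtain \<alpha> \<beta> M1 M2 where a: "\<forall>k. \<alpha> k > (0::real)" and b: "\<forall>i. \<beta> i > (0::real)"
    and m1: "M1 > 0"
    and h1: "\<forall>i. summable (\<lambda>k. hoc p i k * \<alpha> k) \<and> (\<Sum>k. hoc p i k * \<alpha> k) \<le> M1 * \<beta> i"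
    and h2: "\<forall>k. summable (\<lambda>i. hoc p i k * \<beta> i)"
    by blast
  have "summable (\<lambda>i. p * \<beta> i)" using h2[rule_format, of 0] by (simp add: hoc_def)
  hence "(\<lambda>i. p * \<beta> i) \<longlonglongrightarrow> 0" by (rule summable_LIMSEQ_zero)
  hence "(\<lambda>i. (p * \<beta> i) / p) \<longlonglongrightarrow> 0 / p" by (intro tendsto_divide) (use assms in auto)
  hence lim: "\<beta> \<longlonglongrightarrow> 0" using assms by simp
  have pos: "p * \<alpha> 0 / M1 > 0" using assms a m1 by simp
  from lim pos obtain N where N: "\<And>n. n \<ge> N \<Longrightarrow> \<bar>\<beta> n\<bar> < p * \<alpha> 0 / M1"
    unfolding LIMSEQ_def dist_real_def by fastforce
  have "(\<Sum>k\<in>{0}. hoc p N k * \<alpha> k) \<le> (\<Sum>k. hoc p N k * \<alpha> k)"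
    apply (rule sum_le_suminf)
    using h1 apply blast
     apply simp
    using a assms by (auto simp: hoc_def intro!: mult_nonneg_nonneg less_imp_le)
  hence "p * \<alpha> 0 \<le> (\<Sum>k. hoc p N k * \<alpha> k)" by (simp add: hoc_def)
  hence "p * \<alpha> 0 \<le> M1 * \<beta> N" using h1 by (meson order_trans)
  moreover have "\<beta> N < p * \<alpha> 0 / M1" using N[of N] by simp
  ultimately show False using m1 by (simp add: field_simps)
qed

end
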